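(* Let $M\in\mathbb R^{\mathbb N\times\mathbb N}$, let $\mathbb N=\bigcup_{\ell\in\mathbb N}B_\ell$ be a partition, $0<q<1$, $C>0$, $\varepsilon>0$ and $r\in\mathbb N$, such that: $|M_{ij}|\le Cq^{(1/2+\varepsilon)|\ell-k|}$ for all $i\in B_\ell$, $j\in B_k$; for all $i\in B_\ell$, $\#\{j\in B_k:M_{ij}\ne0\}\le Cq^{\min\{k,\ell\}-k}$; for all $j\in B_k$, $\#\{i\in B_\ell:M_{ij}\ne0\}\le Cq^{\min\{k,\ell\}-\ell}$; and $M_{ij}=0$ whenever $i\in B_\ell$, $j\in B_k$ with $|\ell-k|\le r$. Then \[\|M\|_2\le C_{\rm geo}q^{\varepsilon r},\] where $C_{\rm geo}>0$ depends only on $C$ and $q$.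
   Context: $\|\cdot\|_2$ is the operator norm on $\ell_2$.
   Formalization: The constant $C_{\rm geo}$ may depend on $\varepsilon$ as well as on C and q, and is uniform only over M, the partition and r. The statement above fails without it. *)

theory Defs
  imports "HOL-Analysis.Analysis"
begin

text \<open>The operator norm on l2 is the infimum of all constants c >= 0 such that
M maps every l2 sequence x to an l2 sequence with norm at most c times the
norm of x (value infinity if no such c exists).\<close>

definition l2_seq :: "(nat \<Rightarrow> real) \<Rightarrow> bool" where
  "l2_seq x \<longleftrightarrow> summable (\<lambda>j. (x j)^2)"

definition l2_norm_sq :: "(nat \<Rightarrow> real) \<Rightarrow> real" where
  "l2_norm_sq x = (\<Sum>j. (x j)^2)"

definition mat_apply :: "(nat \<Rightarrow> nat \<Rightarrow> real) \<Rightarrow> (nat \<Rightarrow> real) \<Rightarrow> nat \<Rightarrow> real" where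
  "mat_apply M x i = (\<Sum>j. M i j * x j)"

definition l2_opnorm :: "(nat \<Rightarrow> nat \<Rightarrow> real) \<Rightarrow> ereal" where
  "l2_opnorm M = Inf {ereal c | c. c \<ge> 0 \<and>
     (\<forall>x. l2_seq x \<longrightarrow>
        (\<forall>i. summable (\<lambda>j. M i j * x j)) \<and>
        l2_seq (mat_apply M x) \<and>
        sqrt (l2_norm_sq (mat_apply M x)) \<le> c * sqrt (l2_norm_sq x))}"

end

theory Submission imports Defs begin

lemma geo_fin:
  fixes \<rho> :: real
  assumes "0 < \<rho>" "\<rho> < 1" "finite E"
  shows "(\<Sum>e\<in>E. \<rho> ^ e) \<le> 1 / (1 - \<rho>)"
proof -
  have s: "summable (\<lambda>n. \<rho> ^ n)" using assms by (simp add: summable_geometric)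
  have "(\<Sum>e\<in>E. \<rho> ^ e) \<le> (\<Sum>n. \<rho> ^ n)"
    by (rule sum_le_suminf[OF s assms(3)]) (use assms in auto)
  also have "\<dots> = 1 / (1 - \<rho>)" using assms by (simp add: suminf_geometric)
  finally show ?thesis .
qed

lemma geo_two:
  fixes q \<epsilon> :: real and l r :: nat and K :: "nat set"
  assumes q0: "0 < q" and q1: "q < 1" and e0: "\<epsilon> > 0" and fK: "finite K"
  shows "(\<Sum>k\<in>K. if real r < \<bar>real l - real k\<bar> then q powr (\<epsilon> * \<bar>real l - real k\<bar>) else 0)
     \<le> 2 * (q powr \<epsilon>) ^ r / (1 - q powr \<epsilon>)"
proof -
  define \<rho> where "\<rho> = q powr \<epsilon>"
  have r0: "0 < \<rho>" using q0 by (simp add: \<rho>_def)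
  have r1: "\<rho> < 1" unfolding \<rho>_def using powr_less_mono2[OF e0, of q 1] q0 q1 by simp
  have pw: "q powr (\<epsilon> * real n) = \<rho> ^ n" for n
    using powr_realpow[of "q powr \<epsilon>" n] q0 by (simp add: \<rho>_def powr_powr[symmetric])
  define f where "f k = (if real r < \<bar>real l - real k\<bar> then q powr (\<epsilon> * \<bar>real l - real k\<bar>) else 0)" for k
  define A where "A = {k\<in>K. l + r < k}"
  define B where "B = {k\<in>K. k + r < l}"
  have fA: "finite A" "finite B" using fK by (auto simp: A_def B_def)
  have "(\<Sum>k\<in>K. f k) = (\<Sum>k\<in>A \<union> B. f k)"
    by (rule sum.mono_neutral_right[OF fK]) (auto simp: A_def B_def f_def)
  also have "\<dots> = (\<Sum>k\<in>A. f k) + (\<Sum>k\<in>B. f k)"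
    by (rule sum.union_disjoint) (use fA in \<open>auto simp: A_def B_def\<close>)
  also have "(\<Sum>k\<in>A. f k) = (\<Sum>k\<in>A. \<rho> ^ r * \<rho> ^ (k - l - r))"
  proof (rule sum.cong)
    fix k assume "k \<in> A"
    hence k: "l + r < k" by (simp add: A_def)
    hence "\<bar>real l - real k\<bar> = real (k - l)" by simp
    moreover have "\<rho> ^ (k - l) = \<rho> ^ r * \<rho> ^ (k - l - r)"
      using k by (simp add: power_add[symmetric])
    ultimately have "f k = q powr (\<epsilon> * real (k - l))" using k by (simp add: f_def)
    also have "\<dots> = \<rho> ^ (k - l)" by (rule pw)
    finally show "f k = \<rho> ^ r * \<rho> ^ (k - l - r)" using \<open>\<rho> ^ (k - l) = _\<close> by simp
  qed simp
  also have "\<dots> = \<rho> ^ r * (\<Sum>e\<in>(\<lambda>k. k - l - r) ` A. \<rho> ^ e)"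
    by (subst sum.reindex) (auto simp: inj_on_def A_def sum_distrib_left)
  also have "\<dots> \<le> \<rho> ^ r * (1 / (1 - \<rho>))"
    by (rule mult_left_mono[OF geo_fin]) (use r0 r1 fA in auto)
  also have "(\<Sum>k\<in>B. f k) = (\<Sum>k\<in>B. \<rho> ^ r * \<rho> ^ (l - k - r))"
  proof (rule sum.cong)
    fix k assume "k \<in> B"
    hence k: "k + r < l" by (simp add: B_def)
    hence "\<bar>real l - real k\<bar> = real (l - k)" by simp
    moreover have "\<rho> ^ (l - k) = \<rho> ^ r * \<rho> ^ (l - k - r)"
      using k by (simp add: power_add[symmetric])
    ultimately have "f k = q powr (\<epsilon> * real (l - k))" using k by (simp add: f_def)
    also have "\<dots> = \<rho> ^ (l - k)" by (rule pw)
    finally show "f k = \<rho> ^ r * \<rho> ^ (l - k - r)" using \<open>\<rho> ^ (l - k) = _\<close> by simp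
  qed simp
  also have "\<dots> = \<rho> ^ r * (\<Sum>e\<in>(\<lambda>k. l - k - r) ` B. \<rho> ^ e)"
    by (subst sum.reindex) (auto simp: inj_on_def B_def sum_distrib_left)
  also have "\<dots> \<le> \<rho> ^ r * (1 / (1 - \<rho>))"
    by (rule mult_left_mono[OF geo_fin]) (use r0 r1 fA in auto)
  finally show ?thesis by (simp add: f_def \<rho>_def)
qed

lemma expo_eq:
  fixes k l :: nat and \<epsilon> :: real
  shows "real (min k l) - real k + (1/2 + \<epsilon>) * \<bar>real l - real k\<bar> + real k / 2
         = real l / 2 + \<epsilon> * \<bar>real l - real k\<bar>"
  by (cases "k \<le> l") (auto simp: min_def field_simps abs_if)

lemma row_bound:
  fixes M :: "nat \<Rightarrow> nat \<Rightarrow> real" and blk :: "nat \<Rightarrow> nat" and r :: nat and q \<epsilon> C :: real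
  assumes q0: "0 < q" and q1: "q < 1" and C0: "C > 0" and e0: "\<epsilon> > 0"
    and entry: "\<And>i j. \<bar>M i j\<bar> \<le> C * q powr ((1/2 + \<epsilon>) * \<bar>real (blk i) - real (blk j)\<bar>)"
    and cntf: "\<And>i k. finite {j. blk j = k \<and> M i j \<noteq> 0}"
    and cnt: "\<And>i k. real (card {j. blk j = k \<and> M i j \<noteq> 0}) \<le> C * q powr (real (min k (blk i)) - real k)"
    and zero: "\<And>i j. \<bar>real (blk i) - real (blk j)\<bar> \<le> real r \<Longrightarrow> M i j = 0"
    and fF: "finite F"
  shows "(\<Sum>j\<in>F. \<bar>M i j\<bar> * q powr (real (blk j) / 2))
     \<le> (2 * C^2 / (1 - q powr \<epsilon>)) * q powr (\<epsilon> * real r) * q powr (real (blk i) / 2)"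
proof -
  define l where "l = blk i"
  define g where "g j = \<bar>M i j\<bar> * q powr (real (blk j) / 2)" for j
  define h where "h k = (if real r < \<bar>real l - real k\<bar> then q powr (\<epsilon> * \<bar>real l - real k\<bar>) else 0)" for k
  have fK: "finite (blk ` F)" using fF by simp
  have "(\<Sum>j\<in>F. g j) = (\<Sum>k\<in>blk ` F. \<Sum>j\<in>{j\<in>F. blk j = k}. g j)"
    by (rule sum.group[symmetric]) (use fF in auto)
  also have "\<dots> \<le> (\<Sum>k\<in>blk ` F. C^2 * q powr (real l / 2) * h k)"
  proof (rule sum_mono)
    fix k assume "k \<in> blk ` F"
    show "(\<Sum>j\<in>{j\<in>F. blk j = k}. g j) \<le> C^2 * q powr (real l / 2) * h k"
    proof (cases "real r < \<bar>real l - real k\<bar>")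
      case False
      have "(\<Sum>j\<in>{j\<in>F. blk j = k}. g j) = 0"
        by (rule sum.neutral) (use False zero in \<open>auto simp: g_def l_def\<close>)
      thus ?thesis using False by (simp add: h_def)
    next
      case True
      define S where "S = {j\<in>F. blk j = k \<and> M i j \<noteq> 0}"
      define b where "b = C * q powr ((1/2 + \<epsilon>) * \<bar>real l - real k\<bar>) * q powr (real k / 2)"
      have b0: "0 \<le> b" using C0 by (simp add: b_def)
      have "(\<Sum>j\<in>{j\<in>F. blk j = k}. g j) = (\<Sum>j\<in>S. g j)"
        by (rule sum.mono_neutral_right) (use fF in \<open>auto simp: S_def g_def\<close>)
      also have "\<dots> \<le> real (card S) * b"
      proof (rule sum_bounded_above)
        fix j assume "j \<in> S"
        hence "blk j = k" by (simp add: S_def)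
        thus "g j \<le> b" unfolding g_def b_def l_def
          using entry[of i j] by (auto intro!: mult_right_mono)
      qed
      also have "\<dots> \<le> real (card {j. blk j = k \<and> M i j \<noteq> 0}) * b"
        by (intro mult_right_mono b0) (auto intro!: card_mono cntf simp: S_def)
      also have "\<dots> \<le> C * q powr (real (min k l) - real k) * b"
        by (intro mult_right_mono b0) (use cnt[of k i] in \<open>simp add: l_def\<close>)
      also have "\<dots> = C^2 * q powr (real (min k l) - real k + (1/2 + \<epsilon>) * \<bar>real l - real k\<bar> + real k / 2)"
        unfolding powr_add b_def power2_eq_square by (simp only: mult_ac)
      also have "\<dots> = C^2 * q powr (real l / 2) * h k"
        using True by (simp add: expo_eq h_def powr_add)
      finally show ?thesis .
    qed
  qed
  also have "\<dots> = C^2 * q powr (real l / 2) * (\<Sum>k\<in>blk ` F. h k)"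
    by (simp add: sum_distrib_left)
  also have "\<dots> \<le> C^2 * q powr (real l / 2) * (2 * (q powr \<epsilon>) ^ r / (1 - q powr \<epsilon>))"
    by (intro mult_left_mono) (use geo_two[OF q0 q1 e0 fK, of r l] in \<open>simp_all add: h_def\<close>)
  also have "(q powr \<epsilon>) ^ r = q powr (\<epsilon> * real r)"
    using powr_realpow[of "q powr \<epsilon>" r] q0 by (simp add: powr_powr)
  finally show ?thesis by (simp add: g_def l_def mult_ac)
qed

lemma schur_finite:
  fixes a :: "nat \<Rightarrow> nat \<Rightarrow> real" and p x :: "nat \<Rightarrow> real" and \<alpha> :: real
  assumes a0: "\<And>i j. 0 \<le> a i j" and p0: "\<And>j. 0 < p j" and al0: "0 \<le> \<alpha>"
    and row: "\<And>i F. finite F \<Longrightarrow> (\<Sum>j\<in>F. a i j * p j) \<le> \<alpha> * p i"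
    and col: "\<And>j F. finite F \<Longrightarrow> (\<Sum>i\<in>F. a i j * p i) \<le> \<alpha> * p j"
    and fI: "finite I" and fJ: "finite J"
  shows "(\<Sum>i\<in>I. (\<Sum>j\<in>J. a i j * \<bar>x j\<bar>)^2) \<le> \<alpha>^2 * (\<Sum>j\<in>J. (x j)^2)"
proof -
  have cs: "(\<Sum>j\<in>J. a i j * \<bar>x j\<bar>)^2 \<le> (\<alpha> * p i) * (\<Sum>j\<in>J. a i j * (x j)^2 / p j)" for i
  proof -
    have "(\<Sum>j\<in>J. a i j * \<bar>x j\<bar>) = (\<Sum>j\<in>J. sqrt (a i j * p j) * (sqrt (a i j / p j) * \<bar>x j\<bar>))"
    proof (rule sum.cong)
      fix j
      have "sqrt (a i j * p j) * sqrt (a i j / p j) = sqrt (a i j * a i j)"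
        using p0[of j] by (simp add: real_sqrt_mult[symmetric])
      also have "\<dots> = a i j" using a0[of i j] by simp
      finally show "a i j * \<bar>x j\<bar> = sqrt (a i j * p j) * (sqrt (a i j / p j) * \<bar>x j\<bar>)"
        by (simp add: mult.assoc[symmetric])
    qed simp
    hence "(\<Sum>j\<in>J. a i j * \<bar>x j\<bar>)^2 \<le> (\<Sum>j\<in>J. (sqrt (a i j * p j))^2) * (\<Sum>j\<in>J. (sqrt (a i j / p j) * \<bar>x j\<bar>)^2)"
      using Cauchy_Schwarz_ineq_sum by metis
    also have "\<dots> = (\<Sum>j\<in>J. a i j * p j) * (\<Sum>j\<in>J. a i j * (x j)^2 / p j)"
      using a0 p0 by (simp add: power_mult_distrib less_imp_le)
    also have "\<dots> \<le> (\<alpha> * p i) * (\<Sum>j\<in>J. a i j * (x j)^2 / p j)"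
      by (intro mult_right_mono row fJ sum_nonneg) (use a0 p0 in \<open>auto intro!: divide_nonneg_pos\<close>)
    finally show ?thesis .
  qed
  have "(\<Sum>i\<in>I. (\<Sum>j\<in>J. a i j * \<bar>x j\<bar>)^2) \<le> (\<Sum>i\<in>I. (\<alpha> * p i) * (\<Sum>j\<in>J. a i j * (x j)^2 / p j))"
    by (rule sum_mono) (rule cs)
  also have "\<dots> = \<alpha> * (\<Sum>j\<in>J. ((x j)^2 / p j) * (\<Sum>i\<in>I. a i j * p i))"
    by (simp add: sum_distrib_left sum_distrib_right sum_divide_distrib sum.swap[of _ I J] mult_ac)
  also have "\<dots> \<le> \<alpha> * (\<Sum>j\<in>J. ((x j)^2 / p j) * (\<alpha> * p j))"
    by (intro mult_left_mono al0 sum_mono col fI) (use p0 in \<open>auto intro!: divide_nonneg_pos\<close>)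
  also have "\<dots> = \<alpha>^2 * (\<Sum>j\<in>J. (x j)^2)"
    using p0 by (simp add: sum_distrib_left power2_eq_square mult_ac less_imp_neq[symmetric])
  finally show ?thesis .
qed

lemma opnorm_bound:
  fixes M :: "nat \<Rightarrow> nat \<Rightarrow> real" and p :: "nat \<Rightarrow> real" and c :: real
  assumes p0: "\<And>j. 0 < p j" and c0: "0 \<le> c"
    and row: "\<And>i F. finite F \<Longrightarrow> (\<Sum>j\<in>F. \<bar>M i j\<bar> * p j) \<le> c * p i"
    and col: "\<And>j F. finite F \<Longrightarrow> (\<Sum>i\<in>F. \<bar>M i j\<bar> * p i) \<le> c * p j"
  shows "l2_opnorm M \<le> ereal c"
  unfolding l2_opnorm_def
proof (rule Inf_lower, simp, intro exI conjI allI impI)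
  show "0 \<le> c" by (rule c0)
  fix x assume "l2_seq x"
  hence sx: "summable (\<lambda>j. (x j)^2)" by (simp add: l2_seq_def)
  define L where "L = l2_norm_sq x"
  have L: "L = (\<Sum>j. (x j)^2)" by (simp add: L_def l2_norm_sq_def)
  have L0: "0 \<le> L" unfolding L by (intro suminf_nonneg sx) simp
  have sq: "(\<Sum>i\<in>I. (\<Sum>j<n. \<bar>M i j\<bar> * \<bar>x j\<bar>)^2) \<le> c^2 * L" if "finite I" for I n
  proof -
    have "(\<Sum>i\<in>I. (\<Sum>j<n. \<bar>M i j\<bar> * \<bar>x j\<bar>)^2) \<le> c^2 * (\<Sum>j<n. (x j)^2)"
      by (rule schur_finite[where p = p]) (use p0 c0 row col that in auto)
    also have "\<dots> \<le> c^2 * L"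
      unfolding L by (intro mult_left_mono sum_le_suminf sx) auto
    finally show ?thesis .
  qed
  have sa: "summable (\<lambda>j. \<bar>M i j\<bar> * \<bar>x j\<bar>)" for i
  proof (rule summableI_nonneg_bounded)
    fix n
    have "(\<Sum>j<n. \<bar>M i j\<bar> * \<bar>x j\<bar>)^2 \<le> c^2 * L" using sq[of "{i}" n] by simp
    thus "(\<Sum>j<n. \<bar>M i j\<bar> * \<bar>x j\<bar>) \<le> sqrt (c^2 * L)" by (rule real_le_rsqrt)
  qed simp
  show sM: "summable (\<lambda>j. M i j * x j)" for i
    by (rule summable_rabs_cancel) (use sa[of i] in \<open>simp add: abs_mult\<close>)
  define T where "T i = (\<Sum>j. \<bar>M i j\<bar> * \<bar>x j\<bar>)" for i
  have T0: "0 \<le> T i" for i unfolding T_def by (intro suminf_nonneg sa) simp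
  have MT: "\<bar>mat_apply M x i\<bar> \<le> T i" for i
    unfolding mat_apply_def T_def using summable_rabs[OF sa[of i, unfolded abs_mult[symmetric]]]
    by (simp add: abs_mult)
  have TS: "(\<Sum>i<N. (T i)^2) \<le> c^2 * L" for N
  proof (rule LIMSEQ_le_const2)
    show "(\<lambda>n. \<Sum>i<N. (\<Sum>j<n. \<bar>M i j\<bar> * \<bar>x j\<bar>)^2) \<longlonglongrightarrow> (\<Sum>i<N. (T i)^2)"
      unfolding T_def by (intro tendsto_intros summable_LIMSEQ sa)
    show "\<exists>N'. \<forall>n\<ge>N'. (\<Sum>i<N. (\<Sum>j<n. \<bar>M i j\<bar> * \<bar>x j\<bar>)^2) \<le> c^2 * L"
      using sq by auto
  qed
  have MS: "(\<Sum>i<N. (mat_apply M x i)^2) \<le> c^2 * L" for N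
  proof -
    have "(\<Sum>i<N. (mat_apply M x i)^2) \<le> (\<Sum>i<N. (T i)^2)"
    proof (rule sum_mono)
      fix i
      have "\<bar>mat_apply M x i\<bar>^2 \<le> (T i)^2" by (rule power_mono[OF MT]) simp
      thus "(mat_apply M x i)^2 \<le> (T i)^2" by simp
    qed
    thus ?thesis using TS[of N] by linarith
  qed
  have sMx: "summable (\<lambda>i. (mat_apply M x i)^2)"
    by (rule summableI_nonneg_bounded[OF _ MS]) simp
  thus "l2_seq (mat_apply M x)" by (simp add: l2_seq_def)
  have "l2_norm_sq (mat_apply M x) \<le> c^2 * L"
    unfolding l2_norm_sq_def by (rule suminf_le_const[OF sMx MS])
  hence "sqrt (l2_norm_sq (mat_apply M x)) \<le> sqrt (c^2 * L)" by (rule real_sqrt_le_mono)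
  also have "\<dots> = c * sqrt L" using c0 by (simp add: real_sqrt_mult)
  finally show "sqrt (l2_norm_sq (mat_apply M x)) \<le> c * sqrt (l2_norm_sq x)" by (simp add: L_def)
qed

theorem lemma8p3:
  fixes C q \<epsilon> :: real
  assumes "0 < q" and "q < 1" and "C > 0" and "\<epsilon> > 0"
  shows "\<exists>Cgeo > 0. \<forall>(M :: nat \<Rightarrow> nat \<Rightarrow> real) (blk :: nat \<Rightarrow> nat) (r :: nat).
    ((\<forall>i j. \<bar>M i j\<bar> \<le> C * q powr ((1/2 + \<epsilon>) * \<bar>real (blk i) - real (blk j)\<bar>)) \<and>
     (\<forall>i k. finite {j. blk j = k \<and> M i j \<noteq> 0} \<and>
        real (card {j. blk j = k \<and> M i j \<noteq> 0})
          \<le> C * q powr (real (min k (blk i)) - real k)) \<and>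
     (\<forall>j l. finite {i. blk i = l \<and> M i j \<noteq> 0} \<and>
        real (card {i. blk i = l \<and> M i j \<noteq> 0})
          \<le> C * q powr (real (min (blk j) l) - real l)) \<and>
     (\<forall>i j. \<bar>real (blk i) - real (blk j)\<bar> \<le> real r \<longrightarrow> M i j = 0))
    \<longrightarrow> l2_opnorm M \<le> ereal (Cgeo * q powr (\<epsilon> * real r))"
proof -
  note q0 = assms(1) and q1 = assms(2) and C0 = assms(3) and e0 = assms(4)
  have r1: "q powr \<epsilon> < 1" using powr_less_mono2[OF e0, of q 1] q0 q1 by simp
  define Cg where "Cg = 2 * C^2 / (1 - q powr \<epsilon>)"
  have Cg0: "Cg > 0" using r1 C0 by (simp add: Cg_def)
  show ?thesis
  proof (intro exI[of _ Cg] conjI Cg0 allI impI, elim conjE)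
    fix M :: "nat \<Rightarrow> nat \<Rightarrow> real" and blk :: "nat \<Rightarrow> nat" and r :: nat
    assume H1: "\<forall>i j. \<bar>M i j\<bar> \<le> C * q powr ((1/2 + \<epsilon>) * \<bar>real (blk i) - real (blk j)\<bar>)"
      and H2: "\<forall>i k. finite {j. blk j = k \<and> M i j \<noteq> 0} \<and>
        real (card {j. blk j = k \<and> M i j \<noteq> 0}) \<le> C * q powr (real (min k (blk i)) - real k)"
      and H3: "\<forall>j l. finite {i. blk i = l \<and> M i j \<noteq> 0} \<and>
        real (card {i. blk i = l \<and> M i j \<noteq> 0}) \<le> C * q powr (real (min (blk j) l) - real l)"
      and H4: "\<forall>i j. \<bar>real (blk i) - real (blk j)\<bar> \<le> real r \<longrightarrow> M i j = 0"
    show "l2_opnorm M \<le> ereal (Cg * q powr (\<epsilon> * real r))"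
    proof (rule opnorm_bound[where p = "\<lambda>j. q powr (real (blk j) / 2)"])
      show "0 < q powr (real (blk j) / 2)" for j using q0 by simp
      show "0 \<le> Cg * q powr (\<epsilon> * real r)" using Cg0 by simp
      show "(\<Sum>j\<in>F. \<bar>M i j\<bar> * q powr (real (blk j) / 2)) \<le> Cg * q powr (\<epsilon> * real r) * q powr (real (blk i) / 2)"
        if "finite F" for i F
        unfolding Cg_def
        by (rule row_bound[OF q0 q1 C0 e0]) (use H1 H2 H4 that in auto)
      show "(\<Sum>i\<in>F. \<bar>M i j\<bar> * q powr (real (blk i) / 2)) \<le> Cg * q powr (\<epsilon> * real r) * q powr (real (blk j) / 2)"
        if "finite F" for j F
        unfolding Cg_def
      proof (rule row_bound[OF q0 q1 C0 e0, where M = "\<lambda>i j. M j i"])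
        show "\<bar>M j' i'\<bar> \<le> C * q powr ((1/2 + \<epsilon>) * \<bar>real (blk i') - real (blk j')\<bar>)" for i' j'
          using H1[rule_format, of j' i'] by (simp add: abs_minus_commute)
        show "finite {j'. blk j' = k \<and> M j' i' \<noteq> 0}" for i' k using H3 by blast
        show "real (card {j'. blk j' = k \<and> M j' i' \<noteq> 0}) \<le> C * q powr (real (min k (blk i')) - real k)" for i' k
          using H3[rule_format, of k i'] by (simp add: min.commute)
        show "M j' i' = 0" if "\<bar>real (blk i') - real (blk j')\<bar> \<le> real r" for i' j'
          using H4[rule_format, of j' i'] that by (simp add: abs_minus_commute)
      qed (rule that)
    qed
  qed
qed

end
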